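(* Let $G$ be any connected graph on $n$ nodes, $K=K_n$ the complete graph on the same $n$ nodes, and $v\in\mathbb R^n$ any initial vector. Run the modified process (defined below) on $G$ and on $K$, both from $v$, and let $T_G(t)=\|v_G(t)-\bar v\|_1$, $T_K(t)=\|v_K(t)-\bar v\|_1$. Then $\mathbb E_v[T_K(t)]\le\mathbb E_v[T_G(t)]$ for all $t\ge0$.
   Context: Modified averaging process on a graph $H$ with vertex set $\{1,\dots,n\}$: the state vector $v_H(t)\in\mathbb R^n$ starts at $v_H(0)=v$; at each step an unordered pair $\{i,j\}$ of distinct vertices is chosen uniformly at random among all $\binom n2$ pairs (independently of previous steps); if $\{i,j\}$ is an edge of $H$, both $v_i$ and $v_j$ are replaced by $(v_i+v_j)/2$, otherwise the state is unchanged. $\bar v=(a,\dots,a)^T$ with $a=\frac1n\sum_i v_i$. Expectation is over the random sequence of chosen pairs. *)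

theory Defs
  imports "HOL-Probability.Probability"
begin

text \<open>Vertices are 0..<n; vectors in R^n are functions nat => real (only indices < n matter).
  An edge / chosen pair is a 2-element set {i,j}.\<close>

definition pairs :: "nat \<Rightarrow> nat set set" where
  "pairs n = {{i, j} | i j. i < n \<and> j < n \<and> i \<noteq> j}"

definition graph_on :: "nat \<Rightarrow> nat set set \<Rightarrow> bool" where
  "graph_on n E \<longleftrightarrow> E \<subseteq> pairs n"

definition connected_graph :: "nat \<Rightarrow> nat set set \<Rightarrow> bool" where
  "connected_graph n E \<longleftrightarrow> graph_on n E \<and>
     (\<forall>i<n. \<forall>j<n. (\<lambda>x y. {x, y} \<in> E)\<^sup>*\<^sup>* i j)"

definition complete_graph :: "nat \<Rightarrow> nat set set" where
  "complete_graph n = pairs n"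

definition avg_step :: "nat set set \<Rightarrow> nat set \<Rightarrow> (nat \<Rightarrow> real) \<Rightarrow> (nat \<Rightarrow> real)" where
  "avg_step E p w = (if p \<in> E then (\<lambda>k. if k \<in> p then (\<Sum>j\<in>p. w j) / 2 else w k) else w)"

text \<open>Distribution of the state v_H(t): at each step a pair is chosen uniformly among
  all n-choose-2 pairs, independently.\<close>
fun process :: "nat \<Rightarrow> nat set set \<Rightarrow> (nat \<Rightarrow> real) \<Rightarrow> nat \<Rightarrow> (nat \<Rightarrow> real) pmf" where
  "process n E v 0 = return_pmf v"
| "process n E v (Suc t) =
     bind_pmf (process n E v t) (\<lambda>w. map_pmf (\<lambda>p. avg_step E p w) (pmf_of_set (pairs n)))"

definition mean_val :: "nat \<Rightarrow> (nat \<Rightarrow> real) \<Rightarrow> real" where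
  "mean_val n v = (\<Sum>i<n. v i) / real n"

definition l1_dev :: "nat \<Rightarrow> (nat \<Rightarrow> real) \<Rightarrow> (nat \<Rightarrow> real) \<Rightarrow> real" where
  "l1_dev n v w = (\<Sum>i<n. \<bar>w i - mean_val n v\<bar>)"

definition expected_T :: "nat \<Rightarrow> nat set set \<Rightarrow> (nat \<Rightarrow> real) \<Rightarrow> nat \<Rightarrow> real" where
  "expected_T n E v t = measure_pmf.expectation (process n E v t) (l1_dev n v)"

end

theory Submission
  imports Defs "HOL-Combinatorics.Transposition"
begin

lemma finite_pairs: "finite (pairs n)"
proof -
  have "pairs n \<subseteq> Pow {..<n}" by (auto simp: pairs_def)
  thus ?thesis by (rule finite_subset) simp
qed

lemma pairs_ne: "2 \<le> n \<Longrightarrow> pairs n \<noteq> {}"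
proof -
  assume "2 \<le> n"
  hence "{0,1} \<in> pairs n" unfolding pairs_def by force
  thus ?thesis by auto
qed

lemma process_first:
  "process n E w (Suc t) =
     bind_pmf (pmf_of_set (pairs n)) (\<lambda>p. process n E (avg_step E p w) t)"
proof (induction t arbitrary: w)
  case 0
  show ?case by (simp add: bind_return_pmf map_pmf_def)
next
  case (Suc t)
  have "process n E w (Suc (Suc t)) =
     bind_pmf (process n E w (Suc t)) (\<lambda>u. map_pmf (\<lambda>p. avg_step E p u) (pmf_of_set (pairs n)))"
    by (simp only: process.simps)
  also have "\<dots> = bind_pmf (bind_pmf (pmf_of_set (pairs n)) (\<lambda>p. process n E (avg_step E p w) t))
       (\<lambda>u. map_pmf (\<lambda>p. avg_step E p u) (pmf_of_set (pairs n)))"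
    by (simp only: Suc)
  also have "\<dots> = bind_pmf (pmf_of_set (pairs n)) (\<lambda>p. bind_pmf (process n E (avg_step E p w) t)
       (\<lambda>u. map_pmf (\<lambda>p. avg_step E p u) (pmf_of_set (pairs n))))"
    by (rule bind_assoc_pmf)
  also have "\<dots> = bind_pmf (pmf_of_set (pairs n)) (\<lambda>p. process n E (avg_step E p w) (Suc t))"
    by simp
  finally show ?case .
qed

lemma finite_process:
  assumes "2 \<le> n" shows "finite (set_pmf (process n E w t))"
proof (induction t)
  case 0 thus ?case by simp
next
  case (Suc t)
  have "set_pmf (pmf_of_set (pairs n)) = pairs n"
    using finite_pairs pairs_ne[OF assms] by simp
  with Suc show ?case by (simp add: finite_pairs)
qed

fun Phi :: "nat \<Rightarrow> nat set set \<Rightarrow> (nat \<Rightarrow> real) \<Rightarrow> nat \<Rightarrow> (nat \<Rightarrow> real) \<Rightarrow> real" where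
  "Phi n E v 0 w = l1_dev n v w"
| "Phi n E v (Suc t) w = (\<Sum>p\<in>pairs n. Phi n E v t (avg_step E p w)) / real (card (pairs n))"

lemma expect_Phi:
  assumes "2 \<le> n"
  shows "measure_pmf.expectation (process n E w t) (l1_dev n v) = Phi n E v t w"
proof (induction t arbitrary: w)
  case 0 thus ?case by simp
next
  case (Suc t)
  show ?case
    unfolding process_first
    by (subst pmf_expectation_bind_pmf_of_set)
       (auto simp: pairs_ne[OF assms] finite_pairs finite_process[OF assms] Suc sum_divide_distrib divide_inverse_commute sum_distrib_left)
qed

definition mid :: "(nat \<Rightarrow> real) \<Rightarrow> (nat \<Rightarrow> real) \<Rightarrow> (nat \<Rightarrow> real)" where
  "mid x y = (\<lambda>k. (x k + y k) / 2)"

lemma avg_mid: "avg_step E p (mid x y) = mid (avg_step E p x) (avg_step E p y)"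
proof -
  have "(\<Sum>j\<in>p. (x j + y j) / 2) = ((\<Sum>j\<in>p. x j) + (\<Sum>j\<in>p. y j)) / 2"
    by (simp add: sum_divide_distrib[symmetric] sum.distrib)
  thus ?thesis unfolding avg_step_def mid_def by (auto simp: fun_eq_iff)
qed

lemma Phi_convex: "Phi n E v t (mid x y) \<le> (Phi n E v t x + Phi n E v t y) / 2"
proof (induction t arbitrary: x y)
  case 0
  have "\<bar>(x i + y i) / 2 - c\<bar> \<le> (\<bar>x i - c\<bar> + \<bar>y i - c\<bar>) / 2" for i and c :: real
  proof -
    have e: "(x i + y i)/2 - c = ((x i - c) + (y i - c))/2" by (simp add: field_simps)
    show ?thesis unfolding e using abs_triangle_ineq[of "x i - c" "y i - c"] by simp
  qed
  hence "(\<Sum>i<n. \<bar>(x i + y i) / 2 - mean_val n v\<bar>) \<le>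
        (\<Sum>i<n. (\<bar>x i - mean_val n v\<bar> + \<bar>y i - mean_val n v\<bar>) / 2)"
    by (intro sum_mono) auto
  also have "\<dots> = ((\<Sum>i<n. \<bar>x i - mean_val n v\<bar>) + (\<Sum>i<n. \<bar>y i - mean_val n v\<bar>)) / 2"
    by (simp only: sum_divide_distrib[symmetric] sum.distrib)
  finally show ?case by (simp add: l1_dev_def mid_def)
next
  case (Suc t)
  have "(\<Sum>p\<in>pairs n. Phi n E v t (avg_step E p (mid x y))) \<le>
        (\<Sum>p\<in>pairs n. (Phi n E v t (avg_step E p x) + Phi n E v t (avg_step E p y)) / 2)"
    unfolding avg_mid by (intro sum_mono Suc)
  hence "(\<Sum>p\<in>pairs n. Phi n E v t (avg_step E p (mid x y))) / real (card (pairs n)) \<le>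
        (\<Sum>p\<in>pairs n. (Phi n E v t (avg_step E p x) + Phi n E v t (avg_step E p y)) / 2) / real (card (pairs n))"
    by (intro divide_right_mono) auto
  thus ?case by (simp add: sum.distrib sum_divide_distrib add_divide_distrib mult.commute)
qed

lemma transpose_lt: "a < n \<Longrightarrow> b < n \<Longrightarrow> i < n \<Longrightarrow> Transposition.transpose a b i < n"
  by (simp add: Transposition.transpose_def)

lemma image_pairs:
  assumes "a < n" "b < n" "p \<in> pairs n"
  shows "Transposition.transpose a b ` p \<in> pairs n"
proof -
  obtain i j where p: "p = {i, j}" "i < n" "j < n" "i \<noteq> j" using assms(3) by (auto simp: pairs_def)
  let ?s = "Transposition.transpose a b"
  have "?s ` p = {?s i, ?s j}" using p by auto
  moreover have "?s i \<noteq> ?s j" using p(4) by (metis transpose_eq_imp_eq)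
  ultimately show ?thesis using p assms transpose_lt unfolding pairs_def by blast
qed

lemma bij_image_pairs:
  assumes "a < n" "b < n"
  shows "bij_betw ((`) (Transposition.transpose a b)) (pairs n) (pairs n)"
  by (rule bij_betw_byWitness[where f' = "(`) (Transposition.transpose a b)"])
     (auto simp: image_image image_pairs[OF assms])

lemma avg_swap:
  assumes "a < n" "b < n"
  shows "avg_step (pairs n) p (w \<circ> Transposition.transpose a b) =
    avg_step (pairs n) (Transposition.transpose a b ` p) w \<circ> Transposition.transpose a b"
proof -
  let ?s = "Transposition.transpose a b"
  have mem: "p \<in> pairs n \<longleftrightarrow> ?s ` p \<in> pairs n"
    using image_pairs[OF assms, of p] image_pairs[OF assms, of "?s ` p"]
    by (auto simp: image_image)
  have sm: "(\<Sum>j\<in>p. w (?s j)) = (\<Sum>j\<in>?s ` p. w j)"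
    by (simp add: sum.reindex)
  have ki: "k \<in> p \<longleftrightarrow> ?s k \<in> ?s ` p" for k
    by (meson inj_eq inj_image_mem_iff inj_transpose)
  show ?thesis
  proof (cases "p \<in> pairs n")
    case True
    hence T: "?s ` p \<in> pairs n" using mem by simp
    show ?thesis
    proof (rule ext)
      fix k
      show "avg_step (pairs n) p (w \<circ> ?s) k = (avg_step (pairs n) (?s ` p) w \<circ> ?s) k"
        unfolding avg_step_def using True T sm ki[of k] by simp
    qed
  next
    case False
    hence T: "?s ` p \<notin> pairs n" using mem by simp
    show ?thesis unfolding avg_step_def using False T by simp
  qed
qed

lemma Phi_swap:
  assumes "a < n" "b < n"
  shows "Phi n (pairs n) v t (w \<circ> Transposition.transpose a b) = Phi n (pairs n) v t w"
proof (induction t arbitrary: w)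
  case 0
  have "bij_betw (Transposition.transpose a b) {..<n} {..<n}" using assms by simp
  hence "(\<Sum>i<n. \<bar>w (Transposition.transpose a b i) - mean_val n v\<bar>) = (\<Sum>i<n. \<bar>w i - mean_val n v\<bar>)"
    by (rule sum.reindex_bij_betw)
  thus ?case by (simp add: l1_dev_def)
next
  case (Suc t)
  let ?s = "Transposition.transpose a b"
  have "(\<Sum>p\<in>pairs n. Phi n (pairs n) v t (avg_step (pairs n) p (w \<circ> ?s)))
      = (\<Sum>p\<in>pairs n. Phi n (pairs n) v t (avg_step (pairs n) (?s ` p) w))"
    unfolding avg_swap[OF assms] Suc ..
  also have "\<dots> = (\<Sum>p\<in>pairs n. Phi n (pairs n) v t (avg_step (pairs n) p w))"
    using bij_image_pairs[OF assms] by (rule sum.reindex_bij_betw)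
  finally show ?case by (simp del: comp_apply)
qed

lemma Phi_avg_le:
  assumes "p \<in> pairs n"
  shows "Phi n (pairs n) v t (avg_step (pairs n) p w) \<le> Phi n (pairs n) v t w"
proof -
  obtain a b where p: "p = {a, b}" "a < n" "b < n" "a \<noteq> b" using assms by (auto simp: pairs_def)
  let ?s = "Transposition.transpose a b"
  have "avg_step (pairs n) p w = mid w (w \<circ> ?s)"
    using assms p by (auto simp: avg_step_def mid_def fun_eq_iff transpose_def)
  hence "Phi n (pairs n) v t (avg_step (pairs n) p w) \<le>
     (Phi n (pairs n) v t w + Phi n (pairs n) v t (w \<circ> ?s)) / 2"
    using Phi_convex by simp
  thus ?thesis using Phi_swap[OF p(2,3)] by simp
qed

lemma Phi_main:
  assumes "G \<subseteq> pairs n"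
  shows "Phi n (pairs n) v t w \<le> Phi n G v t w"
proof (induction t arbitrary: w)
  case 0 thus ?case by simp
next
  case (Suc t)
  have "Phi n (pairs n) v t (avg_step (pairs n) p w) \<le> Phi n G v t (avg_step G p w)"
    if "p \<in> pairs n" for p
  proof (cases "p \<in> G")
    case True
    hence "avg_step (pairs n) p w = avg_step G p w" using that by (simp add: avg_step_def)
    thus ?thesis using Suc by simp
  next
    case False
    hence "avg_step G p w = w" by (simp add: avg_step_def)
    thus ?thesis using Phi_avg_le[OF that, of v t w] Suc[of w] by simp
  qed
  hence "(\<Sum>p\<in>pairs n. Phi n (pairs n) v t (avg_step (pairs n) p w)) \<le>
         (\<Sum>p\<in>pairs n. Phi n G v t (avg_step G p w))" by (rule sum_mono)
  thus ?case by (simp add: divide_right_mono)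
qed

theorem theorem9:
  fixes n :: nat and G :: "nat set set" and v :: "nat \<Rightarrow> real" and t :: nat
  assumes "connected_graph n G"
  shows "expected_T n (complete_graph n) v t \<le> expected_T n G v t"
proof -
  have G: "G \<subseteq> pairs n" using assms by (simp add: connected_graph_def graph_on_def)
  show ?thesis
  proof (cases "2 \<le> n")
    case True
    show ?thesis unfolding expected_T_def complete_graph_def expect_Phi[OF True]
      using Phi_main[OF G] .
  next
    case False
    hence "pairs n = {}" by (auto simp: pairs_def)
    hence "G = complete_graph n" using G by (simp add: complete_graph_def)
    thus ?thesis by simp
  qed
qed

end
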